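(* Let $n\geq 3$ be an integer and put $m=2^{n-1}$. Let $G_2(n)=\{0,1,\dots,2^n-1\}$ be the gyrogroup with operation $\oplus$ and gyroautomorphisms $\mathrm{gyr}$ defined in the context below. Then $G_2(n)$ is gyrocommutative, i.e. $a\oplus b=\mathrm{gyr}[a,b](b\oplus a)$ for all $a,b\in G_2(n)$.
   Context: Setup: $n\ge 3$, $m=2^{n-1}$, $G_2(n)=\{0,1,\dots,2^n-1\}$, $P(n)=\{0,\dots,m-1\}$, $H(n)=\{m,\dots,2^n-1\}$; $O_P,E_P$ are the odd/even elements of $P(n)$, $O_H,E_H$ the odd/even elements of $H(n)$. For $i,j\in G_2(n)$ let $t,s\in P(n)$ with $t\equiv i+j\pmod m$, $s\equiv i+j+\frac m2\pmod m$, and set $i\oplus j=t$ if $(i,j)\in (P(n)\times P(n))\cup\big[(H(n)\times H(n))\setminus(E_H\times O_H)\big]$; $i\oplus j=t+m$ if $(i,j)\in (P(n)\times H(n))\cup\big[(H(n)\times P(n))\setminus(E_H\times O_P)\big]$; $i\oplus j=s$ if $(i,j)\in E_H\times O_H$; $i\oplus j=s+m$ if $(i,j)\in E_H\times O_P$. Let $A\colon G_2(n)\to G_2(n)$ be $A(i)=r$ if $i\in O_P$, $A(i)=r+m$ if $i\in O_H$, $A(i)=i$ otherwise, where $r\in P(n)$, $r\equiv i+\frac m2\pmod m$. Let $M=[O_P\times(O_H\cup E_H)]\cup[O_H\times(O_P\cup E_H)]\cup[E_H\times(O_P\cup O_H)]$, and define $\mathrm{gyr}[a,b]=A$ if $(a,b)\in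 M$ and $\mathrm{gyr}[a,b]=I$ (identity map) otherwise. With these, $(G_2(n),\oplus)$ is a gyrogroup (identity $0$, $a\oplus(b\oplus c)=(a\oplus b)\oplus\mathrm{gyr}[a,b](c)$, $\mathrm{gyr}[a,b]=\mathrm{gyr}[a\oplus b,b]$, each $\mathrm{gyr}[a,b]$ an automorphism). *)

theory Defs
  imports Main
begin

definition gm :: "nat \<Rightarrow> nat" where "gm n = 2 ^ (n - 1)"

definition G2 :: "nat \<Rightarrow> nat set" where "G2 n = {..< 2 ^ n}"
definition PP :: "nat \<Rightarrow> nat set" where "PP n = {..< gm n}"
definition HH :: "nat \<Rightarrow> nat set" where "HH n = {gm n ..< 2 ^ n}"

definition OP :: "nat \<Rightarrow> nat set" where "OP n = {i \<in> PP n. odd i}"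
definition EP :: "nat \<Rightarrow> nat set" where "EP n = {i \<in> PP n. even i}"
definition OH :: "nat \<Rightarrow> nat set" where "OH n = {i \<in> HH n. odd i}"
definition EH :: "nat \<Rightarrow> nat set" where "EH n = {i \<in> HH n. even i}"

definition gplus :: "nat \<Rightarrow> nat \<Rightarrow> nat \<Rightarrow> nat" where
  "gplus n i j =
    (let m = gm n; t = (i + j) mod m; s = (i + j + m div 2) mod m in
     if (i, j) \<in> EH n \<times> OH n then s
     else if (i, j) \<in> EH n \<times> OP n then s + m
     else if (i, j) \<in> (PP n \<times> PP n) \<union> (HH n \<times> HH n) then t
     else t + m)"

definition gA :: "nat \<Rightarrow> nat \<Rightarrow> nat" where
  "gA n i = (let m = gm n; r = (i + m div 2) mod m in
     if i \<in> OP n then r else if i \<in> OH n then r + m else i)"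

definition gM :: "nat \<Rightarrow> (nat \<times> nat) set" where
  "gM n = (OP n \<times> (OH n \<union> EH n)) \<union> (OH n \<times> (OP n \<union> EH n)) \<union> (EH n \<times> (OP n \<union> OH n))"

definition ggyr :: "nat \<Rightarrow> nat \<Rightarrow> nat \<Rightarrow> nat \<Rightarrow> nat" where
  "ggyr n a b = (if (a, b) \<in> gM n then gA n else id)"

end

theory Submission
  imports Defs
begin

lemma ev_mod: "even (m::nat) \<Longrightarrow> even (x mod m) \<longleftrightarrow> even x"
  by (metis dvd_mod_iff)

theorem mainTheorem3:
  fixes n :: nat
  assumes "n \<ge> 3"
  shows "\<forall>a \<in> G2 n. \<forall>b \<in> G2 n. gplus n a b = ggyr n a b (gplus n b a)"
proof (intro ballI)
  fix a b assume a: "a \<in> G2 n" and b: "b \<in> G2 n"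
  define m where "m = gm n"
  obtain k where nk: "n = k + 3" using assms by (metis add.commute le_add_diff_inverse)
  have m4: "m = 4 * 2^k" unfolding m_def gm_def nk by (simp add: power_add mult.commute)
  have N: "2^n = 2*m" unfolding m4 nk by (simp add: power_add)
  have em: "even m" and emh: "even (m div 2)" and mp: "m > 0" and mh: "m div 2 < m" using m4 by auto
  have S: "PP n = {..<m}" "HH n = {m..<2*m}" "G2 n = {..<2*m}"
    unfolding PP_def HH_def G2_def m_def N[unfolded m_def] by auto
  have ab: "a < 2*m" "b < 2*m" using a b S by auto
  have mm: "\<And>x. (x + m) mod m = x mod m" "\<And>x. x mod m < m" using mp by auto
  have mh2: "\<And>x. (m div 2 + x mod m) mod m = (m div 2 + x) mod m" by (simp add: mod_add_right_eq)
  have mh3: "\<And>x. (m div 2 + (x + m div 2)) mod m = x mod m"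
  proof -
    fix x have "m div 2 + (x + m div 2) = x + m" using em by presburger
    then show "(m div 2 + (x + m div 2)) mod m = x mod m" using mm(1)[of x] by metis
  qed
  have K1: "\<And>x c. (x + m + c) mod m = (x + c) mod m"
    by (metis add.commute add.left_commute mod_add_self2)
  have K3: "\<And>x. (x + m div 2 + m div 2) mod m = x mod m"
    using mh3 by (metis add.commute add.left_commute)
  have ba: "b + a = a + b" by simp
  show "gplus n a b = ggyr n a b (gplus n b a)"
    using ab em emh mp mh
    unfolding ggyr_def gM_def gplus_def gA_def OP_def EP_def OH_def EH_def S m_def[symmetric] Let_def
    apply (cases "a < m"; cases "b < m"; cases "even a"; cases "even b")
    apply (auto simp: ev_mod mod_add_left_eq mm mh2 mh3 K1 K3 ba)
    done
qed

end
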